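(* Let $n\geq 5$ and let $f$ be a permutation of $V(\overline{C_n})$ that is not an automorphism of $\overline{C_n}$. Then $\delta_f(\overline{C_n})\geq 4$.
   Context: $C_n$ is the cycle on vertices $v_1,\dots,v_n$ (with $v_i$ adjacent to $v_{i+1}$, indices mod $n$), and $\overline{C_n}$ is its complement: two distinct vertices are adjacent in $\overline{C_n}$ iff they are not adjacent in $C_n$. $d(x,y)$ denotes the distance in $\overline{C_n}$. For a permutation $f$ of the vertex set and distinct vertices $x,y$, $\delta_f(x,y)=|d(x,y)-d(f(x),f(y))|$, and $\delta_f(\overline{C_n})=\sum\delta_f(x,y)$ over all unordered pairs $\{x,y\}$ of distinct vertices. *)

theory Defs
  imports Main
begin

definition cyc_adj :: "nat \<Rightarrow> nat \<Rightarrow> nat \<Rightarrow> bool" where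
  "cyc_adj n x y \<longleftrightarrow> x < n \<and> y < n \<and> x \<noteq> y \<and> (y = (x + 1) mod n \<or> x = (y + 1) mod n)"

definition ccyc_adj :: "nat \<Rightarrow> nat \<Rightarrow> nat \<Rightarrow> bool" where
  "ccyc_adj n x y \<longleftrightarrow> x < n \<and> y < n \<and> x \<noteq> y \<and> \<not> cyc_adj n x y"

fun ccyc_walk :: "nat \<Rightarrow> nat \<Rightarrow> nat \<Rightarrow> nat \<Rightarrow> bool" where
  "ccyc_walk n 0 x y \<longleftrightarrow> x = y"
| "ccyc_walk n (Suc k) x y \<longleftrightarrow> (\<exists>z. ccyc_adj n x z \<and> ccyc_walk n k z y)"

definition ccyc_dist :: "nat \<Rightarrow> nat \<Rightarrow> nat \<Rightarrow> nat" where
  "ccyc_dist n x y = (LEAST k. ccyc_walk n k x y)"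

definition is_perm :: "nat \<Rightarrow> (nat \<Rightarrow> nat) \<Rightarrow> bool" where
  "is_perm n f \<longleftrightarrow> bij_betw f {..<n} {..<n}"

definition ccyc_aut :: "nat \<Rightarrow> (nat \<Rightarrow> nat) \<Rightarrow> bool" where
  "ccyc_aut n f \<longleftrightarrow> is_perm n f \<and>
     (\<forall>x<n. \<forall>y<n. ccyc_adj n (f x) (f y) \<longleftrightarrow> ccyc_adj n x y)"

definition delta_pair :: "nat \<Rightarrow> (nat \<Rightarrow> nat) \<Rightarrow> nat \<Rightarrow> nat \<Rightarrow> nat" where
  "delta_pair n f x y = nat \<bar>int (ccyc_dist n x y) - int (ccyc_dist n (f x) (f y))\<bar>"

definition delta_total :: "nat \<Rightarrow> (nat \<Rightarrow> nat) \<Rightarrow> nat" where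
  "delta_total n f = (\<Sum>(x, y) \<in> {(x, y). x < y \<and> y < n}. delta_pair n f x y)"

end

theory Submission
  imports Defs
begin

lemma cyc_adj_iff:
  assumes "n \<ge> 3"
  shows "cyc_adj n x y \<longleftrightarrow> x<n \<and> y<n \<and> (y = x+1 \<or> x = y+1 \<or> (x=0 \<and> y=n-1) \<or> (y=0 \<and> x=n-1))"
proof -
  have m: "Suc z mod n = (if z+1<n then z+1 else 0)" if "z < n" for z
  proof (cases "z+1<n")
    case False
    with that have "z+1 = n" by simp
    then show ?thesis by simp
  qed simp
  show ?thesis unfolding cyc_adj_def using assms
    by (auto simp: m split: if_splits)
qed

lemma nbr_card:
  assumes "n \<ge> 3" "v < n"
  shows "card {w. w<n \<and> cyc_adj n v w} = 2"
proof -
  have "{w. w<n \<and> cyc_adj n v w} = {if v+1<n then v+1 else 0, if v=0 then n-1 else v-1}"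
    using assms by (auto simp: cyc_adj_iff)
  moreover have "(if v+1<n then v+1 else 0) \<noteq> (if v=0 then n-1 else v-1)"
    using assms by auto
  ultimately show ?thesis by simp
qed

lemma cyc_adj_sym: "cyc_adj n x y = cyc_adj n y x"
  unfolding cyc_adj_def by blast

lemma cyc_adj_irr: "\<not> cyc_adj n x x"
  unfolding cyc_adj_def by blast

lemma walk1: "ccyc_walk n (Suc 0) x y \<longleftrightarrow> ccyc_adj n x y" by simp

lemma dist_eq:
  assumes "n \<ge> 5" "x<n" "y<n" "x\<noteq>y"
  shows "ccyc_dist n x y = (if cyc_adj n x y then 2 else 1)"
proof (cases "cyc_adj n x y")
  case False
  then have "ccyc_adj n x y" using assms by (simp add: ccyc_adj_def)
  then have w1: "ccyc_walk n 1 x y" by simp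
  have "ccyc_dist n x y = 1" unfolding ccyc_dist_def
    apply (rule Least_equality, rule w1)
    subgoal for k using assms by (cases k) auto
    done
  then show ?thesis using False by simp
next
  case True
  have "\<exists>z. ccyc_adj n x z \<and> ccyc_adj n z y"
  proof -
    have c: "y = x+1 \<or> x = y+1 \<or> (x=0 \<and> y=n-1) \<or> (y=0 \<and> x=n-1)"
      using True assms by (simp add: cyc_adj_iff)
    define z where "z = (if y = x+1 then (if x+3<n then x+3 else x+3-n)
       else if x = y+1 then (if y+3<n then y+3 else y+3-n) else 2)"
    have "ccyc_adj n x z \<and> ccyc_adj n z y"
      using c assms unfolding ccyc_adj_def z_def by (auto simp: cyc_adj_iff)
    then show ?thesis by blast
  qed
  then have w2: "ccyc_walk n 2 x y" by (simp add: numeral_2_eq_2)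
  have nw: "\<not> ccyc_walk n k x y" if "k < 2" for k
    using that True assms by (auto simp: less_Suc_eq numeral_2_eq_2 ccyc_adj_def)
  have "ccyc_dist n x y = 2" unfolding ccyc_dist_def
    apply (rule Least_equality, rule w2) using nw not_less by blast
  then show ?thesis using True by simp
qed


lemma swap_nbr:
  fixes P Q :: "nat \<Rightarrow> nat \<Rightarrow> bool"
  assumes ce: "card {w. w<n \<and> P v w} = card {w. w<n \<and> Q v w}"
    and "u < n" "P v u" "\<not> Q v u"
  shows "\<exists>w<n. Q v w \<and> \<not> P v w"
proof (rule ccontr)
  assume "\<not> ?thesis"
  then have sub: "{w. w<n \<and> Q v w} \<subseteq> {w. w<n \<and> P v w}" by auto
  have "{w. w<n \<and> Q v w} = {w. w<n \<and> P v w}"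
    by (rule card_subset_eq[OF _ sub]) (use ce in auto)
  then show False using assms by blast
qed

lemma four_pairs_aux:
  fixes P Q :: "nat \<Rightarrow> nat \<Rightarrow> bool"
  assumes symP: "\<And>x y. P x y = P y x" and symQ: "\<And>x y. Q x y = Q y x"
    and irrP: "\<And>x. \<not> P x x" and irrQ: "\<And>x. \<not> Q x x"
    and ce: "\<And>v. v<n \<Longrightarrow> card {w. w<n \<and> P v w} = card {w. w<n \<and> Q v w}"
    and ab: "a<n" "b<n" "P a b" "\<not> Q a b"
  shows "\<exists>T \<subseteq> {(x,y). x<y \<and> y<n \<and> P x y \<noteq> Q x y}. card T = 4"
proof -
  obtain c where c: "c<n" "Q a c" "\<not> P a c" using swap_nbr[where P=P and Q=Q and v=a, OF ce[OF ab(1)] ab(2-4)] by blast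
  obtain d where d: "d<n" "Q b d" "\<not> P b d"
    using swap_nbr[where P=P and Q=Q and v=b, OF ce[OF ab(2)] ab(1)] ab symP symQ by blast
  have ce': "card {w. w<n \<and> Q c w} = card {w. w<n \<and> P c w}" using ce[OF c(1)] by simp
  obtain e where e: "e<n" "P c e" "\<not> Q c e"
    using swap_nbr[where P=Q and Q=P and v=c, OF ce' ab(1)] c symP symQ by blast
  have ne: "a \<noteq> b" "a \<noteq> c" "b \<noteq> c" "a \<noteq> d" "b \<noteq> d" "c \<noteq> e" "a \<noteq> e"
    using ab c d e irrP irrQ symP symQ by metis+
  have ne2: "\<not> (b = e \<and> d = c)" using d e symP by metis
  define nm where "nm = (\<lambda>(x::nat) y. (min x y, max x y))"
  let ?T = "{nm a b, nm a c, nm b d, nm c e}"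
  have "?T \<subseteq> {(x,y). x<y \<and> y<n \<and> P x y \<noteq> Q x y}"
    using ab c d e ne symP symQ unfolding nm_def by (auto simp: min_def max_def)
  moreover have "card ?T = 4"
    using ne ne2 unfolding nm_def by (auto simp: min_def max_def)
  ultimately show ?thesis by blast
qed


theorem lemma2p3:
  fixes n :: nat and f :: "nat \<Rightarrow> nat"
  assumes "n \<ge> 5" and "is_perm n f" and "\<not> ccyc_aut n f"
  shows "delta_total n f \<ge> 4"
proof -
  have n3: "n \<ge> 3" using assms(1) by simp
  have bij: "bij_betw f {..<n} {..<n}" using assms(2) by (simp add: is_perm_def)
  then have inj: "inj_on f {..<n}" and img: "f ` {..<n} = {..<n}"
    by (auto simp: bij_betw_def)
  have fn: "x < n \<Longrightarrow> f x < n" for x using img by auto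
  define P where "P = cyc_adj n"
  define Q where "Q = (\<lambda>x y. cyc_adj n (f x) (f y))"
  have symP: "\<And>x y. P x y = P y x" unfolding P_def by (rule cyc_adj_sym)
  have symQ: "\<And>x y. Q x y = Q y x" unfolding Q_def by (rule cyc_adj_sym)
  have irrP: "\<And>x. \<not> P x x" unfolding P_def by (rule cyc_adj_irr)
  have irrQ: "\<And>x. \<not> Q x x" unfolding Q_def by (rule cyc_adj_irr)
  have ce: "card {w. w<n \<and> P v w} = card {w. w<n \<and> Q v w}" if v: "v<n" for v
  proof -
    have "f ` {w. w<n \<and> Q v w} = {u. u<n \<and> cyc_adj n (f v) u}"
    proof
      show "f ` {w. w<n \<and> Q v w} \<subseteq> {u. u<n \<and> cyc_adj n (f v) u}"
        using fn unfolding Q_def by auto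
      show "{u. u<n \<and> cyc_adj n (f v) u} \<subseteq> f ` {w. w<n \<and> Q v w}"
      proof
        fix u assume u: "u \<in> {u. u<n \<and> cyc_adj n (f v) u}"
        then have "u \<in> f ` {..<n}" using img by auto
        then obtain w where "w<n" "u = f w" by auto
        then show "u \<in> f ` {w. w<n \<and> Q v w}" using u unfolding Q_def by auto
      qed
    qed
    moreover have "inj_on f {w. w<n \<and> Q v w}" by (rule inj_on_subset[OF inj]) auto
    ultimately have "card {w. w<n \<and> Q v w} = card {u. u<n \<and> cyc_adj n (f v) u}"
      by (metis card_image)
    also have "\<dots> = 2" using nbr_card[OF n3 fn[OF v]] .
    also have "\<dots> = card {w. w<n \<and> P v w}" using nbr_card[OF n3 v] unfolding P_def by simp
    finally show ?thesis by simp
  qed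
  obtain a b where ab: "a<n" "b<n" "ccyc_adj n (f a) (f b) \<noteq> ccyc_adj n a b"
    using assms(2,3) unfolding ccyc_aut_def by blast
  have "a \<noteq> b" using ab unfolding ccyc_adj_def by auto
  then have "f a \<noteq> f b" using inj ab by (auto simp: inj_on_def)
  have pq: "P a b \<noteq> Q a b" using ab(3) \<open>a \<noteq> b\<close> \<open>f a \<noteq> f b\<close> fn[OF ab(1)] fn[OF ab(2)] ab(1,2)
    unfolding P_def Q_def ccyc_adj_def by simp
  define S where "S = {(x,y). x<y \<and> y<n \<and> P x y \<noteq> Q x y}"
  have "\<exists>T \<subseteq> S. card T = 4"
  proof (cases "P a b")
    case True
    have "\<not> Q a b" using pq True by simp
    from four_pairs_aux[where P=P and Q=Q, OF symP symQ irrP irrQ ce ab(1,2) True this]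
    show ?thesis unfolding S_def .
  next
    case False
    have ce': "\<And>v. v<n \<Longrightarrow> card {w. w<n \<and> Q v w} = card {w. w<n \<and> P v w}" using ce by simp
    have eq: "{(x,y). x<y \<and> y<n \<and> Q x y \<noteq> P x y} = S" unfolding S_def by auto
    have "Q a b" using pq False by simp
    from four_pairs_aux[where P=Q and Q=P, OF symQ symP irrQ irrP ce' ab(1,2) this False]
    show ?thesis unfolding eq .
  qed
  then obtain T where T: "T \<subseteq> S" "card T = 4" by blast
  have dp: "delta_pair n f x y = 1" if "(x,y) \<in> S" for x y
  proof -
    from that have xy: "x<y" "y<n" "P x y \<noteq> Q x y" unfolding S_def by auto
    have "f x \<noteq> f y" using inj xy by (auto simp: inj_on_def)
    have d1: "ccyc_dist n x y = (if P x y then 2 else 1)"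
      unfolding P_def using dist_eq[OF assms(1), of x y] xy by simp
    have d2: "ccyc_dist n (f x) (f y) = (if Q x y then 2 else 1)"
      unfolding Q_def using dist_eq[OF assms(1), of "f x" "f y"] xy fn \<open>f x \<noteq> f y\<close> by simp
    show ?thesis unfolding delta_pair_def d1 d2 using xy(3) by auto
  qed
  have fin: "finite {(x, y). x < y \<and> y < n}"
    by (rule finite_subset[of _ "{..<n} \<times> {..<n}"]) auto
  have "S \<subseteq> {(x, y). x < y \<and> y < n}" unfolding S_def by auto
  have "4 = (\<Sum>p\<in>T. (1::nat))" using T by simp
  also have "\<dots> = (\<Sum>(x,y)\<in>T. delta_pair n f x y)"
    by (rule sum.cong) (use T dp in auto)
  also have "\<dots> \<le> delta_total n f" unfolding delta_total_def
    by (rule sum_mono2[OF fin]) (use T \<open>S \<subseteq> _\<close> in auto)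
  finally show ?thesis .
qed

end
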